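(* There exist $\varepsilon_0>0$ and $n_0$ such that for every $\varepsilon\in(0,\varepsilon_0]$ and $n\ge n_0$ the following holds. Let $\hat G$ be an $\varepsilon$-superextremal two-clique on $n$ vertices with partition $V(\hat G)=A\uplus B$, and let $Z=\{f,f'\}$ where $f,f'$ are vertex-disjoint edges between $A$ and $B$, such that the set of edges of $\hat G$ between $A$ and $B$ is exactly $Z$. Let $\vec H$ be a directed Hamilton cycle of $\hat G$. Then for every $e\in E(H)\setminus Z$ there are at least $n^2/300$ pairs $(e',i)$ with $e'\in E(\hat G)\setminus E(H)$ and $i\in\{1,2\}$ such that the switching $s_i(\vec H;e,e')$ is admissible (with respect to $\hat G$).
   Context: $d(v,X)$ is the number of neighbours of $v$ in $X$. A graph on $n$ vertices is an $\varepsilon$-superextremal two-clique with partition $A\uplus B$ if: (A1) $||A|-|B||\le\varepsilon n$; (A2) $d(a,A)\ge(1/2-\varepsilon)n$ for all but at most $\varepsilon n$ vertices $a\in A$; (A3) $d(a,A)\ge(1/4-\varepsilon)n$ for all $a\in A$; (A4) $d(b,B)\ge(1/2-\varepsilon)n$ for all but at most $\varepsilon n$ vertices $b\in B$; (A5) $d(b,B)\ge(1/4-\varepsilon)n$ for all $b\in B$. A directed Hamilton cycle $\vec H$ is a Hamilton cycle $H$ with a cyclic orientation; its successor function $\pi$ sends $x$ to the head of the arc leaving $x$. For $e=x\pi(x)\in E(H)$ and $e'=x'y'\notin E(H)$ with endpoints labelled so that $x$ lies on the directed path of $\vec H$ from $y'$ to $x'$, let $H_1=(H-\{e,x'\pi(x'),\pi^{-1}(y')y'\})+\{e',x\pi(x'),\pi^{-1}(y')\pi(x)\}$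 and $H_2=(H-\{e,x'\pi(x'),\pi^{-1}(y')y'\})+\{e',x\pi^{-1}(y'),\pi(x)\pi(x')\}$; $s_i(\vec H;e,e')$ is $H_i$ oriented to contain the arc $(x',y')$. It is admissible (with respect to a graph $G$) if $H_i\subseteq G$. *)

theory Defs
  imports Complex_Main
begin

definition simple_graph :: "'a set \<Rightarrow> 'a set set \<Rightarrow> bool" where
  "simple_graph V E \<longleftrightarrow> finite V \<and> (\<forall>e\<in>E. \<exists>u v. u \<in> V \<and> v \<in> V \<and> u \<noteq> v \<and> e = {u, v})"

definition deg_in :: "'a set set \<Rightarrow> 'a \<Rightarrow> 'a set \<Rightarrow> nat" where
  "deg_in E v X = card {u \<in> X. {v, u} \<in> E}"

definition superextremal_two_clique ::
  "real \<Rightarrow> 'a set \<Rightarrow> 'a set set \<Rightarrow> 'a set \<Rightarrow> 'a set \<Rightarrow> bool" where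
  "superextremal_two_clique \<epsilon> V E A B \<longleftrightarrow>
     (let n = real (card V) in
       A \<union> B = V \<and> A \<inter> B = {} \<and>
       \<bar>real (card A) - real (card B)\<bar> \<le> \<epsilon> * n \<and>
       real (card {a \<in> A. real (deg_in E a A) < (1/2 - \<epsilon>) * n}) \<le> \<epsilon> * n \<and>
       (\<forall>a\<in>A. real (deg_in E a A) \<ge> (1/4 - \<epsilon>) * n) \<and>
       real (card {b \<in> B. real (deg_in E b B) < (1/2 - \<epsilon>) * n}) \<le> \<epsilon> * n \<and>
       (\<forall>b\<in>B. real (deg_in E b B) \<ge> (1/4 - \<epsilon>) * n))"

text \<open>A directed Hamilton cycle of (V,E), given by its successor function \<pi>:
  \<pi> permutes V, every vertex reaches every other vertex by iterating \<pi> (one cycle),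
  and each arc x \<pi>(x) is an edge of the graph.\<close>
definition dir_ham_cycle :: "'a set \<Rightarrow> 'a set set \<Rightarrow> ('a \<Rightarrow> 'a) \<Rightarrow> bool" where
  "dir_ham_cycle V E \<pi> \<longleftrightarrow>
     bij_betw \<pi> V V \<and>
     (\<forall>x\<in>V. \<forall>y\<in>V. \<exists>k. (\<pi> ^^ k) x = y) \<and>
     (\<forall>x\<in>V. {x, \<pi> x} \<in> E)"

definition ham_edges :: "'a set \<Rightarrow> ('a \<Rightarrow> 'a) \<Rightarrow> 'a set set" where
  "ham_edges V \<pi> = {{x, \<pi> x} | x. x \<in> V}"

text \<open>The arc (x, \<pi> x) lies on the directed path of the cycle from y' to x':
  x is reached from y' by iterating \<pi> strictly before x' is reached.\<close>
definition arc_on_path :: "('a \<Rightarrow> 'a) \<Rightarrow> 'a \<Rightarrow> 'a \<Rightarrow> 'a \<Rightarrow> bool" where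
  "arc_on_path \<pi> y' x' x \<longleftrightarrow> (\<exists>k. (\<pi> ^^ k) y' = x \<and> (\<forall>j\<le>k. (\<pi> ^^ j) y' \<noteq> x'))"

text \<open>Edge sets of H_1 and H_2 of the switching with e = x\<pi>(x), e' = x'y'.\<close>
definition switch_edges :: "'a set \<Rightarrow> ('a \<Rightarrow> 'a) \<Rightarrow> nat \<Rightarrow> 'a \<Rightarrow> 'a \<Rightarrow> 'a \<Rightarrow> 'a set set" where
  "switch_edges V \<pi> i x x' y' =
     (let pinv = inv_into V \<pi>;
          removed = {{x, \<pi> x}, {x', \<pi> x'}, {pinv y', y'}};
          added = (if i = 1 then {{x', y'}, {x, \<pi> x'}, {pinv y', \<pi> x}}
                   else {{x', y'}, {x, pinv y'}, {\<pi> x, \<pi> x'}})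
      in (ham_edges V \<pi> - removed) \<union> added)"

definition admissible_switch ::
  "'a set \<Rightarrow> 'a set set \<Rightarrow> ('a \<Rightarrow> 'a) \<Rightarrow> 'a \<Rightarrow> 'a set \<Rightarrow> nat \<Rightarrow> bool" where
  "admissible_switch V E \<pi> x e' i \<longleftrightarrow>
     (\<exists>x' y'. e' = {x', y'} \<and> arc_on_path \<pi> y' x' x \<and> switch_edges V \<pi> i x x' y' \<subseteq> E)"

end

theory Submission
  imports Defs
begin


lemma iter_in: "f ` V \<subseteq> V \<Longrightarrow> a \<in> V \<Longrightarrow> (f^^i) a \<in> V"
  by (induction i) auto

lemma funpow_cancel:
  assumes "inj_on f V" "f ` V \<subseteq> V" "a \<in> V" "b \<in> V" "(f^^i) a = (f^^i) b"
  shows "a = b"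
using assms(5) proof (induction i)
  case 0 thus ?case by simp
next
  case (Suc i)
  have "(f^^i) a \<in> V" "(f^^i) b \<in> V" using iter_in[OF assms(2)] assms(3,4) by auto
  then have "(f^^i) a = (f^^i) b" using Suc.prems inj_onD[OF assms(1)] by auto
  thus ?case by (rule Suc.IH)
qed

lemma orbit:
  assumes ham: "dir_ham_cycle V E \<pi>" and fin: "finite V" and w: "w \<in> V"
  shows "bij_betw (\<lambda>t. (\<pi>^^t) w) {..<card V} V \<and> (\<pi>^^(card V)) w = w"
proof -
  let ?n = "card V"
  have bij: "bij_betw \<pi> V V" and reach: "\<forall>x\<in>V. \<forall>y\<in>V. \<exists>k. (\<pi>^^k) x = y"
    using ham unfolding dir_ham_cycle_def by auto
  have inj: "inj_on \<pi> V" and img: "\<pi> ` V \<subseteq> V" using bij by (auto simp: bij_betw_def)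
  have itin: "\<And>t. (\<pi>^^t) w \<in> V" using iter_in[OF img w] .
  have "\<not> inj_on (\<lambda>t. (\<pi>^^t) w) {..?n}"
  proof
    assume "inj_on (\<lambda>t. (\<pi>^^t) w) {..?n}"
    from card_inj_on_le[OF this _ fin] itin have "card {..?n} \<le> ?n" by auto
    thus False by simp
  qed
  then obtain i j where ij0: "i \<le> ?n" "j \<le> ?n" "i \<noteq> j" "(\<pi>^^i) w = (\<pi>^^j) w"
    unfolding inj_on_def by auto
  then obtain i j where ij: "i \<le> ?n" "j \<le> ?n" "i < j" "(\<pi>^^i) w = (\<pi>^^j) w"
    by (metis linorder_neqE_nat)
  define d where "d = j - i"
  have d: "0 < d" "d \<le> ?n" using ij by (auto simp: d_def)
  have "j = i + d" using ij by (simp add: d_def)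
  then have "(\<pi>^^j) w = (\<pi>^^i) ((\<pi>^^d) w)" by (simp add: funpow_add)
  then have dw: "(\<pi>^^d) w = w" using funpow_cancel[OF inj img w itin[of d]] ij(4) by metis
  have per: "\<And>q. (\<pi>^^(d*q)) w = w"
  proof -
    fix q show "(\<pi>^^(d*q)) w = w" by (induction q) (simp_all add: funpow_add dw)
  qed
  have modd: "(\<pi>^^k) w = (\<pi>^^(k mod d)) w" for k
  proof -
    have "(\<pi>^^k) w = (\<pi>^^(k mod d + d*(k div d))) w" by simp
    also have "\<dots> = (\<pi>^^(k mod d)) w" by (simp only: funpow_add comp_apply per)
    finally show ?thesis .
  qed
  have sub: "V \<subseteq> (\<lambda>t. (\<pi>^^t) w) ` {..<d}"
  proof
    fix y assume "y \<in> V"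
    then obtain k where "(\<pi>^^k) w = y" using reach w by blast
    then have "y = (\<pi>^^(k mod d)) w" using modd by simp
    moreover have "k mod d < d" using d by simp
    ultimately show "y \<in> (\<lambda>t. (\<pi>^^t) w) ` {..<d}" by blast
  qed
  then have "?n \<le> card ((\<lambda>t. (\<pi>^^t) w) ` {..<d})" by (simp add: card_mono)
  also have "\<dots> \<le> d" by (metis card_image_le card_lessThan finite_lessThan)
  finally have dn: "d = ?n" using d by simp
  have imgeq: "(\<lambda>t. (\<pi>^^t) w) ` {..<?n} = V" using sub itin dn by auto
  have "inj_on (\<lambda>t. (\<pi>^^t) w) {..<?n}" by (rule eq_card_imp_inj_on) (simp_all add: imgeq)
  thus ?thesis using imgeq dw dn by (simp add: bij_betw_def)
qed



lemma card_idx: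
  assumes "bij_betw v {..<n} V"
  shows "card {c\<in>{..<n}. v c \<in> Y} = card (Y \<inter> V)"
proof -
  have inj: "inj_on v {c\<in>{..<n}. v c \<in> Y}" using assms by (auto simp: bij_betw_def inj_on_def)
  have "v ` {c\<in>{..<n}. v c \<in> Y} = Y \<inter> V" using assms by (auto simp: bij_betw_def)
  then show ?thesis using card_image[OF inj] by simp
qed

lemma core:
  fixes V :: "'a set" and E S F \<pi> and \<epsilon> :: real and n :: nat and x
  assumes sg: "simple_graph V E" and cV: "card V = n" and ham: "dir_ham_cycle V E \<pi>"
  and nbig: "n \<ge> 1000" and eps: "0 < \<epsilon>" "\<epsilon> \<le> 1/100"
  and SV: "S \<subseteq> V" and cS: "real (card S) \<le> (1+\<epsilon>)*n/2"
  and bad: "real (card {s\<in>S. real (deg_in E s S) < (1/2-\<epsilon>)*n}) \<le> \<epsilon>*n"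
  and mindeg: "\<forall>s\<in>S. real (deg_in E s S) \<ge> (1/4-\<epsilon>)*n"
  and F: "finite F" "card F \<le> 4" and cross: "\<forall>u\<in>S. \<forall>u'\<in>V-S. {u,u'}\<in>E \<longrightarrow> u\<in>F"
  and xS: "x\<in>S" "\<pi> x \<in> S"
  shows "real (card {(e', i). e' \<in> E - ham_edges V \<pi> \<and> i \<in> {1::nat, 2} \<and> admissible_switch V E \<pi> x e' i}) \<ge> real n ^ 2 / 300"
proof -
  have finV: "finite V" using sg by (simp add: simple_graph_def)
  have noloop: "\<And>u. {u} \<notin> E"
  proof
    fix u assume "{u} \<in> E"
    then obtain a b where ab: "a \<noteq> b" "{u} = {a,b}" using sg unfolding simple_graph_def by blast
    then have "a \<in> {u}" "b \<in> {u}" by auto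
    thus False using ab(1) by simp
  qed
  have EV: "\<And>e. e \<in> E \<Longrightarrow> e \<subseteq> V"
  proof -
    fix e assume "e \<in> E"
    then obtain a b where "a \<in> V" "b \<in> V" "e = {a,b}" using sg unfolding simple_graph_def by blast
    thus "e \<subseteq> V" by simp
  qed
  have finE: "finite E"
  proof -
    have "E \<subseteq> Pow V" using EV by blast
    thus ?thesis using finV by (simp add: finite_subset)
  qed
  have bij: "bij_betw \<pi> V V" and hamE: "\<forall>y\<in>V. {y, \<pi> y} \<in> E" using ham unfolding dir_ham_cycle_def by auto
  have injpi: "inj_on \<pi> V" and img: "\<pi> ` V \<subseteq> V" using bij by (auto simp: bij_betw_def)
  have xV: "x \<in> V" using xS SV by auto
  define w where "w = \<pi> x"
  have wV: "w \<in> V" using xV img w_def by auto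
  define v where "v = (\<lambda>t. (\<pi>^^t) w)"
  have orb: "bij_betw v {..<card V} V \<and> v (card V) = w"
    unfolding v_def by (rule orbit[OF ham finV wV])
  have vbij: "bij_betw v {..<n} V" and vn: "v n = w" using orb cV by simp_all
  have vinj: "inj_on v {..<n}" using vbij by (simp add: bij_betw_def)
  have vV: "\<And>t. v t \<in> V" unfolding v_def using iter_in[OF img wV] .
  have vsuc: "\<And>t. v (Suc t) = \<pi> (v t)" by (simp add: v_def)
  have v0: "v 0 = w" by (simp add: v_def)
  have vinjD: "\<And>p q. p < n \<Longrightarrow> q < n \<Longrightarrow> v p = v q \<Longrightarrow> p = q" using vinj by (auto simp: inj_on_def)
  have xv: "x = v (n-1)"
  proof -
    have "\<pi> (v (n-1)) = v n" using vsuc[of "n-1"] nbig by simp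
    then have "\<pi> (v (n-1)) = \<pi> x" using vn w_def by simp
    from inj_onD[OF injpi this vV xV] show ?thesis by simp
  qed
  have pinv: "\<And>t. 1 \<le> t \<Longrightarrow> inv_into V \<pi> (v t) = v (t - 1)"
  proof -
    fix t :: nat assume "1 \<le> t"
    then have "v t = \<pi> (v (t-1))" using vsuc[of "t-1"] by simp
    thus "inv_into V \<pi> (v t) = v (t - 1)" using inv_into_f_f[OF injpi vV] by simp
  qed
  have vmodsuc: "\<And>t. t < n \<Longrightarrow> \<pi> (v t) = v (Suc t mod n)"
  proof -
    fix t assume "t < n"
    show "\<pi> (v t) = v (Suc t mod n)"
    proof (cases "Suc t < n")
      case True thus ?thesis using vsuc by simp
    next
      case False then have "Suc t = n" using \<open>t < n\<close> by simp
      thus ?thesis using vsuc vn v0 by (metis mod_self)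
    qed
  qed
  have Hidx: "\<And>p q. p < n \<Longrightarrow> q < n \<Longrightarrow> {v p, v q} \<in> ham_edges V \<pi> \<Longrightarrow> q = Suc p mod n \<or> p = Suc q mod n"
  proof -
    fix p q assume pq: "p < n" "q < n" "{v p, v q} \<in> ham_edges V \<pi>"
    then obtain y where y: "y \<in> V" "{v p, v q} = {y, \<pi> y}" unfolding ham_edges_def by blast
    have "y \<in> v ` {..<n}" using y(1) bij_betw_imp_surj_on[OF vbij] by simp
    then obtain t where t: "t < n" "y = v t" by auto
    have e2: "\<pi> y = v (Suc t mod n)" using vmodsuc t by simp
    have s: "Suc t mod n < n" using nbig by simp
    have "{v p, v q} = {v t, v (Suc t mod n)}" using y(2) t e2 by simp
    then have "(v p = v t \<and> v q = v (Suc t mod n)) \<or> (v p = v (Suc t mod n) \<and> v q = v t)"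
      by (simp add: doubleton_eq_iff)
    then have "(p = t \<and> q = Suc t mod n) \<or> (p = Suc t mod n \<and> q = t)"
      using vinjD[OF pq(1) t(1)] vinjD[OF pq(2) s] vinjD[OF pq(1) s] vinjD[OF pq(2) t(1)] by blast
    thus "q = Suc p mod n \<or> p = Suc q mod n" by blast
  qed
  have finS: "finite S" using finV SV finite_subset by auto
  have vshift: "\<And>k q. (\<pi>^^k) (v q) = v (k + q)" unfolding v_def by (simp add: funpow_add)
  define G where "G = {s\<in>S. \<not> real (deg_in E s S) < (1/2-\<epsilon>)*n}"
  define Bd where "Bd = {s\<in>S. real (deg_in E s S) < (1/2-\<epsilon>)*n}"
  define Xs where "Xs z = {a\<in>{..<n}. 1 \<le> a \<and> a \<le> n-2 \<and> v a \<in> S \<and> {z, v a} \<in> E \<and> v (a-1) \<in> G \<and> v (Suc a) \<in> G}" for z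
  define NN where "NN g = {u\<in>S. u \<noteq> g \<and> {g,u} \<notin> E}" for g
  have GS: "G \<subseteq> S" unfolding G_def by auto
  have Xbound: "real (card (Xs z)) \<ge> (1/4 - 3*\<epsilon>)*n - 6" if z: "z \<in> S" for z
  proof -
    define N where "N = {a\<in>{..<n}. v a \<in> {u\<in>S. {z,u}\<in>E}}"
    have cN: "card N = deg_in E z S"
    proof -
      have "card N = card ({u\<in>S. {z,u}\<in>E} \<inter> V)" unfolding N_def by (rule card_idx[OF vbij])
      also have "{u\<in>S. {z,u}\<in>E} \<inter> V = {u\<in>S. {z,u}\<in>E}" using SV by auto
      finally show ?thesis by (simp add: deg_in_def)
    qed
    define I1 where "I1 = {a\<in>{..<n}. v a \<in> F}"
    define I2 where "I2 = {c\<in>{..<n}. v c \<in> Bd}"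
    have sub: "N \<subseteq> Xs z \<union> {0, n-1} \<union> I1 \<union> Suc ` I2 \<union> (\<lambda>c. c - 1) ` I2"
    proof
      fix a assume a: "a \<in> N"
      show "a \<in> Xs z \<union> {0, n-1} \<union> I1 \<union> Suc ` I2 \<union> (\<lambda>c. c - 1) ` I2"
      proof (cases "a = 0 \<or> a = n-1")
        case True thus ?thesis by auto
      next
        case False
        then have a1: "1 \<le> a" "a \<le> n-2" "a < n" using a N_def by auto
        have vaS: "v a \<in> S" and za: "{z, v a} \<in> E" using a N_def by auto
        have prev: "v (a-1) \<in> G \<or> a \<in> I1 \<or> a \<in> Suc ` I2"
        proof (cases "v (a-1) \<in> S")
          case True
          show ?thesis
          proof (cases "v (a-1) \<in> G")
            case False
            then have "a - 1 \<in> I2" using True a1 unfolding I2_def G_def Bd_def by auto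
            moreover have "a = Suc (a-1)" using a1 by simp
            ultimately show ?thesis by blast
          qed simp
        next
          case False
          have "{v (a-1), \<pi> (v (a-1))} \<in> E" using hamE vV by blast
          moreover have "\<pi> (v (a-1)) = v a" using vsuc[of "a-1"] a1 by simp
          ultimately have "{v a, v (a-1)} \<in> E" by (simp add: insert_commute)
          then have "v a \<in> F" using cross vaS False vV by blast
          thus ?thesis using a1 unfolding I1_def by simp
        qed
        have next1: "v (Suc a) \<in> G \<or> a \<in> I1 \<or> a \<in> (\<lambda>c. c - 1) ` I2"
        proof (cases "v (Suc a) \<in> S")
          case True
          show ?thesis
          proof (cases "v (Suc a) \<in> G")
            case False
            then have "Suc a \<in> I2" using True a1 unfolding I2_def G_def Bd_def by auto
            moreover have "a = Suc a - 1" by simp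
            ultimately show ?thesis by blast
          qed simp
        next
          case False
          have "{v a, \<pi> (v a)} \<in> E" using hamE vV by blast
          then have "{v a, v (Suc a)} \<in> E" using vsuc by simp
          then have "v a \<in> F" using cross vaS False vV by blast
          thus ?thesis using a1 unfolding I1_def by simp
        qed
        show ?thesis using prev next1 a1 vaS za unfolding Xs_def by auto
      qed
    qed
    have fin1: "finite (Xs z)" unfolding Xs_def by simp
    have "card N \<le> card (Xs z \<union> {0, n-1} \<union> I1 \<union> Suc ` I2 \<union> (\<lambda>c. c - 1) ` I2)"
      using sub by (rule card_mono[rotated]) (simp add: fin1 I1_def I2_def)
    also have "\<dots> \<le> card (Xs z) + 2 + card I1 + card I2 + card I2"
    proof -
      have "card (Xs z \<union> {0, n-1} \<union> I1 \<union> Suc ` I2 \<union> (\<lambda>c. c - 1) ` I2)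
         \<le> card (Xs z \<union> {0, n-1} \<union> I1 \<union> Suc ` I2) + card ((\<lambda>c. c - 1) ` I2)" by (rule card_Un_le)
      moreover have "card (Xs z \<union> {0, n-1} \<union> I1 \<union> Suc ` I2) \<le> card (Xs z \<union> {0, n-1} \<union> I1) + card (Suc ` I2)" by (rule card_Un_le)
      moreover have "card (Xs z \<union> {0, n-1} \<union> I1) \<le> card (Xs z \<union> {0, n-1}) + card I1" by (rule card_Un_le)
      moreover have "card (Xs z \<union> {0, n-1}) \<le> card (Xs z) + card {0, n-1}" by (rule card_Un_le)
      moreover have "card {0, n-1} \<le> 2" by (simp add: card_insert_le_m1)
      moreover have "card (Suc ` I2) \<le> card I2" by (rule card_image_le) (simp add: I2_def)
      moreover have "card ((\<lambda>c. c - 1) ` I2) \<le> card I2" by (rule card_image_le) (simp add: I2_def)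
      ultimately show ?thesis by linarith
    qed
    finally have c1: "card N \<le> card (Xs z) + 2 + card I1 + card I2 + card I2" .
    have "card I1 = card (F \<inter> V)" unfolding I1_def by (rule card_idx[OF vbij])
    also have "\<dots> \<le> card F" using F by (simp add: card_mono)
    finally have cI1: "card I1 \<le> 4" using F by simp
    have "card I2 = card (Bd \<inter> V)" unfolding I2_def by (rule card_idx[OF vbij])
    also have "Bd \<inter> V = Bd" using SV unfolding Bd_def by auto
    finally have cI2: "real (card I2) \<le> \<epsilon>*n" using bad unfolding Bd_def by simp
    have "real (deg_in E z S) \<le> real (card (Xs z)) + 6 + 2*\<epsilon>*n"
      using c1 cI1 cI2 cN by linarith
    moreover have "(1/4-\<epsilon>)*n \<le> real (deg_in E z S)" using mindeg z by blast
    ultimately show ?thesis by (simp add: algebra_simps)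
  qed
  have NNb: "real (card (NN g)) \<le> 3/2*\<epsilon>*n" if g: "g \<in> G" for g
  proof -
    have gS: "g \<in> S" using g GS by auto
    define nb where "nb = {u\<in>S. {g,u}\<in>E}"
    have nbsub: "nb \<subseteq> S - {g}" using noloop unfolding nb_def by auto
    have NNeq: "NN g = (S - {g}) - nb" unfolding NN_def nb_def by auto
    have "card (NN g) = card (S - {g}) - card nb" unfolding NNeq
      using nbsub finS by (simp add: card_Diff_subset finite_subset)
    moreover have "card (S - {g}) = card S - 1" using gS finS by simp
    moreover have "card nb \<le> card S - 1" using nbsub finS
      by (metis card_mono finite_Diff calculation(2))
    moreover have "card S \<ge> 1" using gS finS by (metis One_nat_def Suc_leI card_gt_0_iff empty_iff)
    ultimately have e0: "card (NN g) + card nb + 1 = card S" by linarith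
    have e1: "real (card (NN g)) = real (card S) - real (card nb) - 1" using arg_cong[OF e0, of real] by simp
    have e2: "real (card nb) \<ge> (1/2-\<epsilon>)*n" using g unfolding G_def nb_def deg_in_def by simp
    from e1 e2 cS show ?thesis by (simp add: algebra_simps)
  qed
  have finNN: "\<And>u. finite (NN u)" unfolding NN_def using finS by simp
  define C where "C u = {b\<in>{..<n}. b \<le> n-2 \<and> v (Suc b) \<in> NN u}" for u
  have finC: "\<And>u. finite (C u)" unfolding C_def by simp
  have Cb: "card (C u) \<le> card (NN u)" for u
  proof (rule card_inj_on_le[of "\<lambda>b. v (Suc b)"])
    show "inj_on (\<lambda>b. v (Suc b)) (C u)"
    proof (rule inj_onI)
      fix b b' assume "b \<in> C u" "b' \<in> C u" "v (Suc b) = v (Suc b')"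
      then have "Suc b = Suc b'" using vinjD[of "Suc b" "Suc b'"] nbig unfolding C_def by auto
      thus "b = b'" by simp
    qed
    show "(\<lambda>b. v (Suc b)) ` C u \<subseteq> NN u" unfolding C_def by auto
  qed (rule finNN)
  have finXs: "\<And>z. finite (Xs z)" unfolding Xs_def by simp
  have Xsn: "\<And>z. card (Xs z) \<le> n"
  proof -
    fix z have "Xs z \<subseteq> {..<n}" unfolding Xs_def by auto
    then show "card (Xs z) \<le> n" by (metis card_lessThan card_mono finite_lessThan)
  qed
  have sigb: "real (card (Sigma (Xs z) (\<lambda>a. C (v (a-1))))) \<le> n * (3/2*\<epsilon>*n)" for z
  proof -
    have "real (card (Sigma (Xs z) (\<lambda>a. C (v (a-1))))) = (\<Sum>a\<in>Xs z. real (card (C (v (a-1)))))"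
      by (simp add: card_SigmaI finXs finC)
    also have "\<dots> \<le> real (card (Xs z)) * (3/2*\<epsilon>*n)"
    proof (rule sum_bounded_above)
      fix a assume "a \<in> Xs z"
      then have "v (a-1) \<in> G" unfolding Xs_def by simp
      then have "real (card (NN (v (a-1)))) \<le> 3/2*\<epsilon>*n" by (rule NNb)
      moreover have "card (C (v (a-1))) \<le> card (NN (v (a-1)))" by (rule Cb)
      ultimately show "real (card (C (v (a-1)))) \<le> 3/2*\<epsilon>*n" by linarith
    qed
    also have "\<dots> \<le> n * (3/2*\<epsilon>*n)"
      by (rule mult_right_mono) (use Xsn[of z] eps in auto)
    finally show ?thesis .
  qed
  define X where "X = Xs x"
  define W where "W = Xs w"
  define T where "T = {(e', i). e' \<in> E - ham_edges V \<pi> \<and> i \<in> {1::nat, 2} \<and> admissible_switch V E \<pi> x e' i}"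
  define P1 where "P1 = {(a,b) \<in> X \<times> W. a \<le> b \<and> {v (a-1), v (Suc b)} \<in> E \<and> \<not>(a = 1 \<and> b = n-2)}"
  define P2 where "P2 = {(a,b) \<in> X \<times> W. b \<le> a \<and> {v (b-1), v (Suc a)} \<in> E \<and> \<not>(b = 1 \<and> a = n-2)}"
  define B1 where "B1 = {(a,b) \<in> X \<times> W. a \<le> b \<and> {v (a-1), v (Suc b)} \<notin> E}"
  define B2 where "B2 = {(a,b) \<in> X \<times> W. b \<le> a \<and> {v (b-1), v (Suc a)} \<notin> E}"
  have finX: "finite X" "finite W" unfolding X_def W_def by (simp_all add: finXs)
  have finP: "finite P1" "finite P2" "finite B1" "finite B2" unfolding P1_def P2_def B1_def B2_def
    using finX by (auto intro: finite_subset[of _ "X \<times> W"])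
  have cover: "X \<times> W \<subseteq> P1 \<union> P2 \<union> B1 \<union> B2 \<union> {(1, n-2), (n-2, 1)}"
    unfolding P1_def P2_def B1_def B2_def by auto
  have cXW: "card X * card W \<le> card P1 + card P2 + card B1 + card B2 + 2"
  proof -
    have "card X * card W = card (X \<times> W)" by (simp add: card_cartesian_product)
    also have "\<dots> \<le> card (P1 \<union> P2 \<union> B1 \<union> B2 \<union> {(1, n-2), (n-2, 1)})"
      using cover finP by (intro card_mono) auto
    also have "\<dots> \<le> card (P1 \<union> P2 \<union> B1 \<union> B2) + card {(1::nat, n-2), (n-2, 1::nat)}" by (rule card_Un_le)
    also have "\<dots> \<le> card (P1 \<union> P2 \<union> B1 \<union> B2) + 2" by (simp add: card_insert_le_m1)
    finally have h1: "card X * card W \<le> card (P1 \<union> P2 \<union> B1 \<union> B2) + 2" .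
    have "card (P1 \<union> P2 \<union> B1 \<union> B2) \<le> card (P1 \<union> P2 \<union> B1) + card B2" by (rule card_Un_le)
    moreover have "card (P1 \<union> P2 \<union> B1) \<le> card (P1 \<union> P2) + card B1" by (rule card_Un_le)
    moreover have "card (P1 \<union> P2) \<le> card P1 + card P2" by (rule card_Un_le)
    ultimately show ?thesis using h1 by linarith
  qed
  have cB1: "real (card B1) \<le> n * (3/2*\<epsilon>*n)"
  proof -
    have "B1 \<subseteq> Sigma X (\<lambda>a. C (v (a-1)))"
    proof
      fix ab assume ab: "ab \<in> B1"
      then obtain a b where abd: "ab = (a,b)" "a \<in> X" "b \<in> W" "a \<le> b" "{v (a-1), v (Suc b)} \<notin> E"
        unfolding B1_def by auto
      have bb: "b < n" "b \<le> n-2" "v (Suc b) \<in> G" "a < n" using abd unfolding X_def W_def Xs_def by auto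
      have "v (Suc b) \<noteq> v (a-1)"
      proof
        assume "v (Suc b) = v (a-1)"
        then have "Suc b = a - 1" using vinjD[of "Suc b" "a-1"] bb nbig by simp
        thus False using abd(4) by simp
      qed
      then have "v (Suc b) \<in> NN (v (a-1))" using bb abd GS unfolding NN_def by (auto simp: insert_commute)
      then show "ab \<in> Sigma X (\<lambda>a. C (v (a-1)))" using abd bb unfolding C_def by auto
    qed
    then have "card B1 \<le> card (Sigma X (\<lambda>a. C (v (a-1))))"
      by (intro card_mono) (simp_all add: finX finC)
    thus ?thesis using sigb[of x] unfolding X_def by linarith
  qed
  have cB2: "real (card B2) \<le> n * (3/2*\<epsilon>*n)"
  proof -
    have "B2 \<subseteq> (\<lambda>(b,a). (a,b)) ` Sigma W (\<lambda>b. C (v (b-1)))"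
    proof
      fix ab assume ab: "ab \<in> B2"
      then obtain a b where abd: "ab = (a,b)" "a \<in> X" "b \<in> W" "b \<le> a" "{v (b-1), v (Suc a)} \<notin> E"
        unfolding B2_def by auto
      have bb: "a < n" "a \<le> n-2" "v (Suc a) \<in> G" "b < n" using abd unfolding X_def W_def Xs_def by auto
      have "v (Suc a) \<noteq> v (b-1)"
      proof
        assume "v (Suc a) = v (b-1)"
        then have "Suc a = b - 1" using vinjD[of "Suc a" "b-1"] bb nbig by simp
        thus False using abd(4) by simp
      qed
      then have "v (Suc a) \<in> NN (v (b-1))" using bb abd GS unfolding NN_def by (auto simp: insert_commute)
      then have "(b,a) \<in> Sigma W (\<lambda>b. C (v (b-1)))" using abd bb unfolding C_def by auto
      then show "ab \<in> (\<lambda>(b,a). (a,b)) ` Sigma W (\<lambda>b. C (v (b-1)))" using abd(1) by force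
    qed
    then have "card B2 \<le> card ((\<lambda>(b,a). (a,b)) ` Sigma W (\<lambda>b. C (v (b-1))))"
      by (intro card_mono) (simp_all add: finX finC)
    also have "\<dots> \<le> card (Sigma W (\<lambda>b. C (v (b-1))))" by (rule card_image_le) (simp add: finX finC)
    finally show ?thesis using sigb[of w] unfolding W_def by linarith
  qed
  have hsub: "ham_edges V \<pi> \<subseteq> E" unfolding ham_edges_def using hamE by auto
  have memT: "({v p, v q}, i) \<in> T" if pq: "Suc p < q" "q < n" "\<not>(p = 0 \<and> q = n-1)" "{v p, v q} \<in> E"
     "i \<in> {1,2}" "switch_edges V \<pi> i x (v p) (v q) \<subseteq> E" for p q i
  proof -
    have p: "p < n" using pq by simp
    have notH: "{v p, v q} \<notin> ham_edges V \<pi>"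
    proof
      assume "{v p, v q} \<in> ham_edges V \<pi>"
      from Hidx[OF p pq(2) this] have o: "q = Suc p mod n \<or> p = Suc q mod n" .
      have m1: "Suc p mod n = Suc p" using pq by simp
      show False
      proof (cases "Suc q = n")
        case True
        then have "Suc q mod n = 0" by simp
        thus False using o m1 pq True by auto
      next
        case False
        then have "Suc q mod n = Suc q" using pq by simp
        thus False using o m1 pq by auto
      qed
    qed
    have arc: "arc_on_path \<pi> (v q) (v p) x"
      unfolding arc_on_path_def
    proof (intro exI conjI allI impI)
      have "n - 1 - q + q = n - 1" using pq by simp
      then show "(\<pi>^^(n-1-q)) (v q) = x" using vshift xv by simp
      fix j assume j: "j \<le> n-1-q"
      show "(\<pi>^^j) (v q) \<noteq> v p"
      proof
        assume "(\<pi>^^j) (v q) = v p"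
        then have "v (j + q) = v p" using vshift by simp
        moreover have "j + q < n" using j pq by linarith
        ultimately have "j + q = p" using vinjD[of "j+q" p] p by simp
        thus False using pq by simp
      qed
    qed
    have "admissible_switch V E \<pi> x {v p, v q} i" unfolding admissible_switch_def using arc pq(6) by blast
    thus ?thesis unfolding T_def using pq notH by simp
  qed
  have sw1: "switch_edges V \<pi> 1 x x' y' \<subseteq> E" if "{x',y'} \<in> E" "{x, \<pi> x'} \<in> E" "{inv_into V \<pi> y', \<pi> x} \<in> E" for x' y'
    using that hsub unfolding switch_edges_def Let_def by auto
  have sw2: "switch_edges V \<pi> 2 x x' y' \<subseteq> E" if "{x',y'} \<in> E" "{x, inv_into V \<pi> y'} \<in> E" "{\<pi> x, \<pi> x'} \<in> E" for x' y'
    using that hsub unfolding switch_edges_def Let_def by auto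
  define f1 where "f1 = (\<lambda>(a,b). ({v (a-1), v (Suc b)}, 1::nat))"
  define f2 where "f2 = (\<lambda>(a,b). ({v (b-1), v (Suc a)}, 2::nat))"
  have f1T: "f1 ` P1 \<subseteq> T"
  proof
    fix t assume "t \<in> f1 ` P1"
    then obtain a b where ab: "(a,b) \<in> P1" "t = f1 (a,b)" by auto
    have h: "1 \<le> a" "a \<le> n-2" "{x, v a} \<in> E" "1 \<le> b" "b \<le> n-2" "{w, v b} \<in> E" "a \<le> b"
      "{v (a-1), v (Suc b)} \<in> E" "\<not>(a = 1 \<and> b = n-2)"
      using ab(1) unfolding P1_def X_def W_def Xs_def by auto
    have e2: "\<pi> (v (a-1)) = v a" using vsuc[of "a-1"] h by simp
    have e3: "inv_into V \<pi> (v (Suc b)) = v b" using pinv[of "Suc b"] by simp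
    have "switch_edges V \<pi> 1 x (v (a-1)) (v (Suc b)) \<subseteq> E"
      by (rule sw1) (use h e2 e3 w_def in \<open>auto simp: insert_commute\<close>)
    moreover have "Suc (a-1) < Suc b" "Suc b < n" "\<not>(a-1 = 0 \<and> Suc b = n-1)" using h nbig by auto
    ultimately have "({v (a-1), v (Suc b)}, 1) \<in> T" using h(8) by (intro memT[of "a-1" "Suc b" 1]) auto
    thus "t \<in> T" using ab by (simp add: f1_def)
  qed
  have f2T: "f2 ` P2 \<subseteq> T"
  proof
    fix t assume "t \<in> f2 ` P2"
    then obtain a b where ab: "(a,b) \<in> P2" "t = f2 (a,b)" by auto
    have h: "1 \<le> a" "a \<le> n-2" "{x, v a} \<in> E" "1 \<le> b" "b \<le> n-2" "{w, v b} \<in> E" "b \<le> a"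
      "{v (b-1), v (Suc a)} \<in> E" "\<not>(b = 1 \<and> a = n-2)"
      using ab(1) unfolding P2_def X_def W_def Xs_def by auto
    have e2: "\<pi> (v (b-1)) = v b" using vsuc[of "b-1"] h by simp
    have e3: "inv_into V \<pi> (v (Suc a)) = v a" using pinv[of "Suc a"] by simp
    have "switch_edges V \<pi> 2 x (v (b-1)) (v (Suc a)) \<subseteq> E"
      by (rule sw2) (use h e2 e3 w_def in \<open>auto simp: insert_commute\<close>)
    moreover have "Suc (b-1) < Suc a" "Suc a < n" "\<not>(b-1 = 0 \<and> Suc a = n-1)" using h nbig by auto
    ultimately have "({v (b-1), v (Suc a)}, 2) \<in> T" using h(8) by (intro memT[of "b-1" "Suc a" 2]) auto
    thus "t \<in> T" using ab by (simp add: f2_def)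
  qed
  have inj1: "inj_on f1 P1"
  proof (rule inj_onI)
    fix ab ab' assume ab: "ab \<in> P1" "ab' \<in> P1" "f1 ab = f1 ab'"
    obtain a b a' b' where d: "ab = (a,b)" "ab' = (a',b')" by fastforce
    have h: "1 \<le> a" "a \<le> n-2" "1 \<le> b" "b \<le> n-2" "a \<le> b" "1 \<le> a'" "a' \<le> n-2" "1 \<le> b'" "b' \<le> n-2" "a' \<le> b'"
      using ab(1,2) unfolding d P1_def X_def W_def Xs_def by auto
    have "{v (a-1), v (Suc b)} = {v (a'-1), v (Suc b')}" using ab(3) unfolding d f1_def by simp
    then have "(v (a-1) = v (a'-1) \<and> v (Suc b) = v (Suc b')) \<or> (v (a-1) = v (Suc b') \<and> v (Suc b) = v (a'-1))"
      by (simp add: doubleton_eq_iff)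
    moreover have "a - 1 < n" "a' - 1 < n" "Suc b < n" "Suc b' < n" using h nbig by auto
    ultimately have "(a-1 = a'-1 \<and> Suc b = Suc b') \<or> (a-1 = Suc b' \<and> Suc b = a'-1)"
      using vinjD by metis
    then show "ab = ab'" using h unfolding d by auto
  qed
  have inj2: "inj_on f2 P2"
  proof (rule inj_onI)
    fix ab ab' assume ab: "ab \<in> P2" "ab' \<in> P2" "f2 ab = f2 ab'"
    obtain a b a' b' where d: "ab = (a,b)" "ab' = (a',b')" by fastforce
    have h: "1 \<le> a" "a \<le> n-2" "1 \<le> b" "b \<le> n-2" "b \<le> a" "1 \<le> a'" "a' \<le> n-2" "1 \<le> b'" "b' \<le> n-2" "b' \<le> a'"
      using ab(1,2) unfolding d P2_def X_def W_def Xs_def by auto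
    have "{v (b-1), v (Suc a)} = {v (b'-1), v (Suc a')}" using ab(3) unfolding d f2_def by simp
    then have "(v (b-1) = v (b'-1) \<and> v (Suc a) = v (Suc a')) \<or> (v (b-1) = v (Suc a') \<and> v (Suc a) = v (b'-1))"
      by (simp add: doubleton_eq_iff)
    moreover have "b - 1 < n" "b' - 1 < n" "Suc a < n" "Suc a' < n" using h nbig by auto
    ultimately have "(b-1 = b'-1 \<and> Suc a = Suc a') \<or> (b-1 = Suc a' \<and> Suc a = b'-1)"
      using vinjD by metis
    then show "ab = ab'" using h unfolding d by auto
  qed
  have finT: "finite T"
  proof -
    have "T \<subseteq> E \<times> {1,2}" unfolding T_def by auto
    thus ?thesis using finE finite_subset by blast
  qed
  have disj: "f1 ` P1 \<inter> f2 ` P2 = {}" unfolding f1_def f2_def by auto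
  have cT: "card P1 + card P2 \<le> card T"
  proof -
    have "card P1 + card P2 = card (f1 ` P1) + card (f2 ` P2)"
      using card_image[OF inj1] card_image[OF inj2] by simp
    also have "\<dots> = card (f1 ` P1 \<union> f2 ` P2)" using disj finP by (simp add: card_Un_disjoint)
    also have "\<dots> \<le> card T" using f1T f2T finT by (intro card_mono) auto
    finally show ?thesis .
  qed
  define N where "N = real n"
  have N: "N \<ge> 1000" using nbig unfolding N_def by simp
  have cX: "real (card X) \<ge> 22/100*N - 6" and cW: "real (card W) \<ge> 22/100*N - 6"
  proof -
    have "(1/4 - 3*\<epsilon>)*N \<ge> 22/100*N" using eps N by (intro mult_right_mono) auto
    then show "real (card X) \<ge> 22/100*N - 6" "real (card W) \<ge> 22/100*N - 6"
      using Xbound[of x] Xbound[of w] xS w_def unfolding X_def W_def N_def by auto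
  qed
  have pos: "22/100*N - 6 \<ge> 0" using N by simp
  have prod: "real (card X) * real (card W) \<ge> (22/100*N - 6) * (22/100*N - 6)"
    using cX cW pos by (intro mult_mono) auto
  have eNN: "\<epsilon> * (N*N) \<le> 1/100 * (N*N)" using eps by (intro mult_right_mono) auto
  have NN1000: "N * N \<ge> 1000 * N" using N by (intro mult_right_mono) auto
  have tot: "real (card X) * real (card W) \<le> real (card T) + real (card B1) + real (card B2) + 2"
  proof -
    have "card X * card W \<le> card T + card B1 + card B2 + 2" using cXW cT by linarith
    then have "real (card X * card W) \<le> real (card T + card B1 + card B2 + 2)" by (simp only: of_nat_le_iff)
    thus ?thesis by simp
  qed
  have B12: "real (card B1) + real (card B2) \<le> 3 * (\<epsilon> * (N*N))"
    using cB1 cB2 unfolding N_def by (simp add: algebra_simps)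
  have "real (card T) \<ge> (22/100*N - 6) * (22/100*N - 6) - 3/100 * (N*N) - 2"
    using tot prod B12 eNN by linarith
  moreover have "(22/100*N - 6) * (22/100*N - 6) - 3/100 * (N*N) - 2 \<ge> N^2/300"
  proof -
    have sq: "(22/100*N - 6) * (22/100*N - 6) = 484/10000*(N*N) - 264/100*N + 36"
      by (simp add: algebra_simps)
    have "N^2 = N*N" by (simp add: power2_eq_square)
    thus ?thesis using sq NN1000 N by linarith
  qed
  ultimately show ?thesis unfolding T_def N_def by linarith
qed


lemma card4: "card {a::'a,b,c,d} \<le> 4" using card_length[of "[a,b,c,d]"] by simp

theorem mainTheorem9:
  shows "\<exists>\<epsilon>0::real. \<epsilon>0 > 0 \<and> (\<exists>n0::nat. \<forall>\<epsilon>::real. \<forall>n::nat.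
     0 < \<epsilon> \<and> \<epsilon> \<le> \<epsilon>0 \<and> n \<ge> n0 \<longrightarrow>
     (\<forall>(V::nat set) E A B a1 b1 a2 b2 \<pi>.
        simple_graph V E \<and> card V = n \<and>
        superextremal_two_clique \<epsilon> V E A B \<and>
        a1 \<in> A \<and> a2 \<in> A \<and> b1 \<in> B \<and> b2 \<in> B \<and> a1 \<noteq> a2 \<and> b1 \<noteq> b2 \<and>
        {e \<in> E. e \<inter> A \<noteq> {} \<and> e \<inter> B \<noteq> {}} = {{a1, b1}, {a2, b2}} \<and>
        dir_ham_cycle V E \<pi>
        \<longrightarrow>
        (\<forall>x\<in>V. {x, \<pi> x} \<notin> {{a1, b1}, {a2, b2}} \<longrightarrow>
           real (card {(e', i). e' \<in> E - ham_edges V \<pi> \<and> i \<in> {1::nat, 2} \<and>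
                                 admissible_switch V E \<pi> x e' i})
             \<ge> real n ^ 2 / 300)))"
proof -
  have main: "real (card {(e', i). e' \<in> E - ham_edges V \<pi> \<and> i \<in> {1::nat, 2} \<and>
                                 admissible_switch V E \<pi> x e' i}) \<ge> real n ^ 2 / 300"
    if eps: "0 < \<epsilon>" "\<epsilon> \<le> 1/100" "n \<ge> 1000"
    and H: "simple_graph V E" "card V = n" "superextremal_two_clique \<epsilon> V E A B"
       "a1 \<in> A" "a2 \<in> A" "b1 \<in> B" "b2 \<in> B"
       "{e \<in> E. e \<inter> A \<noteq> {} \<and> e \<inter> B \<noteq> {}} = {{a1, b1}, {a2, b2}}" "dir_ham_cycle V E \<pi>"
    and x: "x \<in> V" "{x, \<pi> x} \<notin> {{a1, b1}, {a2, b2}}"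
    for \<epsilon> :: real and n :: nat and V :: "nat set" and E A B a1 b1 a2 b2 \<pi> x
  proof -
    have SE: "A \<union> B = V" "A \<inter> B = {}" "\<bar>real (card A) - real (card B)\<bar> \<le> \<epsilon> * n"
       "real (card {a \<in> A. real (deg_in E a A) < (1/2 - \<epsilon>) * n}) \<le> \<epsilon> * n"
       "\<forall>a\<in>A. real (deg_in E a A) \<ge> (1/4 - \<epsilon>) * n"
       "real (card {b \<in> B. real (deg_in E b B) < (1/2 - \<epsilon>) * n}) \<le> \<epsilon> * n"
       "\<forall>b\<in>B. real (deg_in E b B) \<ge> (1/4 - \<epsilon>) * n"
      using H(3) unfolding superextremal_two_clique_def Let_def H(2) by auto
    have finV: "finite V" using H(1) by (simp add: simple_graph_def)
    have finA: "finite A" "finite B" using SE(1) finV by (auto intro: finite_subset)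
    have cAB: "card A + card B = n" using card_Un_disjoint[OF finA SE(2)] SE(1) H(2) by simp
    then have cAB': "real (card A) + real (card B) = real n" by (metis of_nat_add)
    have cA: "real (card A) \<le> (1+\<epsilon>)*n/2" and cB: "real (card B) \<le> (1+\<epsilon>)*n/2"
      using SE(3) cAB' by (auto simp: algebra_simps abs_le_iff)
    have hamE: "{x, \<pi> x} \<in> E" and piV: "\<pi> x \<in> V" using H(9) x(1) unfolding dir_ham_cycle_def bij_betw_def by auto
    have crossZ: "{u,u'} \<in> {{a1, b1}, {a2, b2}}" if "u \<in> A" "u' \<in> B" "{u,u'} \<in> E" for u u'
    proof -
      have "{u,u'} \<in> {e \<in> E. e \<inter> A \<noteq> {} \<and> e \<inter> B \<noteq> {}}" using that by auto
      thus ?thesis using H(8) by simp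
    qed
    have crossF: "u \<in> {a1,b1,a2,b2}" if "u \<in> A \<and> u' \<in> B \<or> u \<in> B \<and> u' \<in> A" "{u,u'} \<in> E" for u u'
    proof -
      have "{u,u'} \<in> {{a1, b1}, {a2, b2}}"
        using that crossZ[of u u'] crossZ[of u' u] by (auto simp: insert_commute)
      then show ?thesis by auto
    qed
    have F: "finite {a1,b1,a2,b2}" "card {a1,b1,a2,b2} \<le> 4" using card4 by auto
    show ?thesis
    proof (cases "x \<in> A")
      case True
      have "\<pi> x \<in> A"
      proof (rule ccontr)
        assume "\<pi> x \<notin> A"
        then have "\<pi> x \<in> B" using piV SE(1) by auto
        then have "{x, \<pi> x} \<in> {{a1, b1}, {a2, b2}}" using crossZ True hamE by blast
        thus False using x(2) by simp
      qed
      show ?thesis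
      proof (rule core[OF H(1,2,9) eps(3,1,2) _ cA SE(4,5) F _ True \<open>\<pi> x \<in> A\<close>])
        show "A \<subseteq> V" using SE(1) by auto
        show "\<forall>u\<in>A. \<forall>u'\<in>V - A. {u, u'} \<in> E \<longrightarrow> u \<in> {a1, b1, a2, b2}"
          using crossF SE(1) by blast
      qed
    next
      case False
      then have xB: "x \<in> B" using x(1) SE(1) by auto
      have "\<pi> x \<in> B"
      proof (rule ccontr)
        assume "\<pi> x \<notin> B"
        then have "\<pi> x \<in> A" using piV SE(1) by auto
        moreover have "{\<pi> x, x} \<in> E" using hamE by (simp add: insert_commute)
        ultimately have "{\<pi> x, x} \<in> {{a1, b1}, {a2, b2}}" using crossZ xB by blast
        thus False using x(2) by (simp add: insert_commute)
      qed
      show ?thesis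
      proof (rule core[OF H(1,2,9) eps(3,1,2) _ cB SE(6,7) F _ xB \<open>\<pi> x \<in> B\<close>])
        show "B \<subseteq> V" using SE(1) by auto
        show "\<forall>u\<in>B. \<forall>u'\<in>V - B. {u, u'} \<in> E \<longrightarrow> u \<in> {a1, b1, a2, b2}"
          using crossF SE(1) by blast
      qed
    qed
  qed
  show ?thesis
    apply (rule exI[of _ "1/100::real"])
    apply (rule conjI, simp)
    apply (rule exI[of _ "1000::nat"])
    apply (intro allI impI ballI)
    apply (elim conjE)
    apply (rule main; assumption)
    done
qed
end
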